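(* Let $I\subseteq\mathbb{R}[x_1,\dots,x_n]$ be an ideal. Then there exists a function $\Psi:\mathbb N\to\mathbb N$ such that $\mathrm{TH}_{\Psi(k)}(I)\subseteq \mathrm{TH}_k(\sqrt[\mathbb R]{I})$ for all $k\in\mathbb N$.
   Context: $\mathbb{R}[\mathbf x]=\mathbb{R}[x_1,\dots,x_n]$ and $\mathbb{R}[\mathbf x]_k$ denotes the polynomials of degree at most $k$. The real radical of an ideal $I$ is $\sqrt[\mathbb R]{I}=\{f\in\mathbb{R}[\mathbf x]: f^{2m}+\sum_i g_i^2\in I$ for some $m\in\mathbb N$ and $g_i\in\mathbb{R}[\mathbf x]\}$. A polynomial $h$ is $k$-sos modulo an ideal $J$ if there are $g_1,\dots,g_r\in\mathbb{R}[\mathbf x]_k$ with $h-\sum_i g_i^2\in J$. The $k$-th theta body is $\mathrm{TH}_k(J)=\{p\in\mathbb R^n: l(p)\ge 0$ for every $l\in\mathbb{R}[\mathbf x]_1$ that is $k$-sos modulo $J\}$. *)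

theory Defs
  imports Complex_Main "HOL-Library.Poly_Mapping"
begin

(* Real polynomials in the variables indexed by a finite type 'n:
  monomials are finitely supported exponent vectors, polynomials are finitely
  supported coefficient maps on monomials. *)

type_synonym 'n rpoly = "('n \<Rightarrow>\<^sub>0 nat) \<Rightarrow>\<^sub>0 real"

definition mon_deg :: "('n::finite \<Rightarrow>\<^sub>0 nat) \<Rightarrow> nat" where
  "mon_deg m = (\<Sum>i\<in>UNIV. Poly_Mapping.lookup m i)"

definition deg_le :: "nat \<Rightarrow> 'n::finite rpoly \<Rightarrow> bool" where
  "deg_le k p \<longleftrightarrow> (\<forall>m\<in>Poly_Mapping.keys p. mon_deg m \<le> k)"

definition peval :: "'n::finite rpoly \<Rightarrow> ('n \<Rightarrow> real) \<Rightarrow> real" where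
  "peval p x = (\<Sum>m\<in>Poly_Mapping.keys p. Poly_Mapping.lookup p m * (\<Prod>i\<in>UNIV. x i ^ Poly_Mapping.lookup m i))"

definition is_ideal :: "'n::finite rpoly set \<Rightarrow> bool" where
  "is_ideal I \<longleftrightarrow> 0 \<in> I \<and> (\<forall>a\<in>I. \<forall>b\<in>I. a + b \<in> I) \<and> (\<forall>a\<in>I. \<forall>r. r * a \<in> I)"

definition real_radical :: "'n::finite rpoly set \<Rightarrow> 'n rpoly set" where
  "real_radical I = {f. \<exists>m::nat. \<exists>gs::'n rpoly list.
      f ^ (2 * m) + (\<Sum>g\<leftarrow>gs. g ^ 2) \<in> I}"

definition k_sos_mod :: "nat \<Rightarrow> 'n::finite rpoly set \<Rightarrow> 'n rpoly \<Rightarrow> bool" where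
  "k_sos_mod k J h \<longleftrightarrow> (\<exists>gs::'n rpoly list. (\<forall>g\<in>set gs. deg_le k g) \<and>
      h - (\<Sum>g\<leftarrow>gs. g ^ 2) \<in> J)"

definition theta_body :: "nat \<Rightarrow> 'n::finite rpoly set \<Rightarrow> ('n \<Rightarrow> real) set" where
  "theta_body k J = {p. \<forall>l. deg_le 1 l \<and> k_sos_mod k J l \<longrightarrow> peval l p \<ge> 0}"

end

theory Submission
  imports Defs
begin

definition cst :: "real \<Rightarrow> 'n::finite rpoly" where "cst c = Poly_Mapping.single 0 c"

lemma cst_add: "cst (a+b) = cst a + cst b" by (simp add: cst_def single_add)
lemma cst_mult: "cst (a*b) = cst a * cst b" by (simp add: cst_def mult_single)
lemma cst_one: "cst 1 = 1" by (simp add: cst_def)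
lemma cst_zero: "cst 0 = 0" by (simp add: cst_def)
lemma cst_uminus: "cst (-a) = - cst a" by (simp add: cst_def single_uminus)
lemma cst_diff: "cst (a-b) = cst a - cst b" by (simp add: cst_def single_diff)
lemma cst_power: "cst (a^n) = cst a ^ n"
  by (induct n) (simp_all add: cst_one cst_mult)

lemma mon_deg_0: "mon_deg (0::'n::finite \<Rightarrow>\<^sub>0 nat) = 0" by (simp add: mon_deg_def)
lemma mon_deg_add: "mon_deg (a + b) = mon_deg a + mon_deg (b::'n::finite \<Rightarrow>\<^sub>0 nat)"
  by (simp add: mon_deg_def lookup_add sum.distrib)

lemma deg_le_mono: "deg_le a p \<Longrightarrow> a \<le> b \<Longrightarrow> deg_le b p"
  unfolding deg_le_def by auto
lemma deg_le_cst: "deg_le a (cst c)"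
  unfolding deg_le_def cst_def by (simp add: mon_deg_0)
lemma deg_le_0: "deg_le a 0"
  unfolding deg_le_def by simp
lemma deg_le_one: "deg_le a 1"
  unfolding deg_le_def by (simp add: mon_deg_0)
lemma deg_le_add: "deg_le a p \<Longrightarrow> deg_le a q \<Longrightarrow> deg_le a (p + q)"
  unfolding deg_le_def
proof (intro ballI)
  fix m assume p: "\<forall>m\<in>Poly_Mapping.keys p. mon_deg m \<le> a" and q: "\<forall>m\<in>Poly_Mapping.keys q. mon_deg m \<le> a"
    and m: "m \<in> Poly_Mapping.keys (p + q)"
  have "m \<in> Poly_Mapping.keys p \<union> Poly_Mapping.keys q" using keys_add[of p q] m by (rule subsetD)
  then show "mon_deg m \<le> a" using p q by (cases "m \<in> Poly_Mapping.keys p") auto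
qed
lemma deg_le_uminus: "deg_le a p \<Longrightarrow> deg_le a (- p)"
  unfolding deg_le_def by simp
lemma deg_le_diff: "deg_le a p \<Longrightarrow> deg_le a q \<Longrightarrow> deg_le a (p - q)"
  using deg_le_add[of a p "-q"] deg_le_uminus by auto
lemma deg_le_mult: "deg_le a p \<Longrightarrow> deg_le b q \<Longrightarrow> deg_le (a+b) (p * q)"
  unfolding deg_le_def using keys_mult[of p q] by (force simp: mon_deg_add add_mono)
lemma deg_le_power: "deg_le a p \<Longrightarrow> deg_le (n*a) (p ^ n)"
proof (induct n)
  case 0 then show ?case by (simp add: deg_le_one)
next
  case (Suc n) then show ?case using deg_le_mult[of a p "n*a" "p^n"] by (simp add: add.commute)
qed
lemma deg_le_exists: "\<exists>a. deg_le a (p::'n::finite rpoly)"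
  unfolding deg_le_def by (rule exI[of _ "Max (mon_deg ` Poly_Mapping.keys p)"]) simp
lemma deg_le_list: "\<exists>a. \<forall>g\<in>set (gs::'n::finite rpoly list). deg_le a g"
proof (induct gs)
  case Nil then show ?case by simp
next
  case (Cons g gs)
  then obtain a where a: "\<forall>g\<in>set gs. deg_le a g" by blast
  obtain b where b: "deg_le b g" using deg_le_exists by blast
  show ?case using a b by (intro exI[of _ "a+b"]) (auto intro: deg_le_mono)
qed

lemma ideal_neg: "is_ideal I \<Longrightarrow> a \<in> I \<Longrightarrow> - a \<in> I"
  unfolding is_ideal_def by (metis mult_minus1)
lemma ideal_mult: "is_ideal I \<Longrightarrow> a \<in> I \<Longrightarrow> r * a \<in> I"
  unfolding is_ideal_def by blast
lemma ideal_add: "is_ideal I \<Longrightarrow> a \<in> I \<Longrightarrow> b \<in> I \<Longrightarrow> a + b \<in> I"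
  unfolding is_ideal_def by blast
lemma ideal_diff: "is_ideal I \<Longrightarrow> a \<in> I \<Longrightarrow> b \<in> I \<Longrightarrow> a - b \<in> I"
  using ideal_add ideal_neg by (metis diff_conv_add_uminus)
lemma ideal_zero: "is_ideal I \<Longrightarrow> 0 \<in> I"
  unfolding is_ideal_def by blast

lemma sos_mod_mono: "k_sos_mod a J h \<Longrightarrow> a \<le> b \<Longrightarrow> k_sos_mod b J h"
  unfolding k_sos_mod_def using deg_le_mono by blast
lemma sos_mod_add: "is_ideal J \<Longrightarrow> k_sos_mod a J h \<Longrightarrow> k_sos_mod a J h' \<Longrightarrow> k_sos_mod a J (h + h')"
  unfolding k_sos_mod_def
proof (elim exE conjE)
  fix gs gs' assume J: "is_ideal J" and 1: "\<forall>g\<in>set gs. deg_le a g" "h - (\<Sum>g\<leftarrow>gs. g\<^sup>2) \<in> J"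
    and 2: "\<forall>g\<in>set gs'. deg_le a g" "h' - (\<Sum>g\<leftarrow>gs'. g\<^sup>2) \<in> J"
  have "h + h' - (\<Sum>g\<leftarrow>gs@gs'. g\<^sup>2) = (h - (\<Sum>g\<leftarrow>gs. g\<^sup>2)) + (h' - (\<Sum>g\<leftarrow>gs'. g\<^sup>2))"
    by simp
  note e = this
  show "\<exists>gs. (\<forall>g\<in>set gs. deg_le a g) \<and> h + h' - (\<Sum>g\<leftarrow>gs. g\<^sup>2) \<in> J"
    using 1 2 ideal_add[OF J, of "h - (\<Sum>g\<leftarrow>gs. g\<^sup>2)" "h' - (\<Sum>g\<leftarrow>gs'. g\<^sup>2)"]
    apply (intro exI[of _ "gs@gs'"] conjI)
     apply auto[1]
    apply (subst e) by blast
qed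
lemma sos_mod_zero: "is_ideal J \<Longrightarrow> k_sos_mod a J 0"
  unfolding k_sos_mod_def by (intro exI[of _ "[]"]) (simp add: ideal_zero)
lemma sos_mod_sum: assumes "is_ideal J" "finite B" "\<And>b. b \<in> B \<Longrightarrow> k_sos_mod a J (f b)"
  shows "k_sos_mod a J (\<Sum>b\<in>B. f b)"
  using assms(2,3) by (induct B rule: finite_induct) (auto simp: sos_mod_zero sos_mod_add assms(1))
lemma sos_mod_sq: "is_ideal J \<Longrightarrow> deg_le a g \<Longrightarrow> k_sos_mod a J (g^2)"
  unfolding k_sos_mod_def by (intro exI[of _ "[g]"]) (simp add: ideal_zero)

lemma cst_numeral: "cst (numeral n) = numeral n" by (simp add: cst_def)

lemma sq_lin: "(cst a + cst b * u)^2 = cst (a^2) + cst (2*a*b) * u + cst (b^2) * (u::'n::finite rpoly)^2"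
  by (simp add: power2_eq_square cst_mult cst_numeral algebra_simps)

lemma univ_sos:
  fixes t :: "'n::finite rpoly"
  assumes "deg_le D t"
  shows "\<delta> > 0 \<Longrightarrow> \<exists>c qs. c \<ge> 0 \<and> (\<forall>q\<in>set qs. deg_le (2^j*D) q) \<and>
     cst \<delta> + t + cst c * t^(2^(Suc j)) = (\<Sum>q\<leftarrow>qs. q^2)"
proof (induct j arbitrary: \<delta>)
  case 0
  define q where "q = cst (sqrt \<delta>) + cst (1/(2*sqrt \<delta>)) * t"
  have "q^2 = cst (sqrt \<delta> ^2) + cst (2*sqrt \<delta>*(1/(2*sqrt \<delta>))) * t + cst ((1/(2*sqrt \<delta>))^2) * t^2"
    unfolding q_def by (rule sq_lin)
  also have "2*sqrt \<delta>*(1/(2*sqrt \<delta>)) = 1" using 0 by simp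
  also have "sqrt \<delta> ^2 = \<delta>" using 0 by simp
  finally have e: "q^2 = cst \<delta> + t + cst ((1/(2*sqrt \<delta>))^2) * t^2" by (simp add: cst_one)
  have d: "deg_le D q" unfolding q_def
    using deg_le_add[OF deg_le_cst deg_le_mult[OF deg_le_cst[of 0] assms]] by simp
  show ?case using e d
    by (intro exI[of _ "(1/(2*sqrt \<delta>))^2"] exI[of _ "[q]"]) simp
next
  case (Suc j)
  have "\<delta>/2 > 0" using Suc by simp
  from Suc(1)[OF this] obtain c qs where "c \<ge> 0" and qs: "\<forall>q\<in>set qs. deg_le (2^j*D) q"
    and e1: "cst (\<delta>/2) + t + cst c * t^(2^(Suc j)) = (\<Sum>q\<leftarrow>qs. q^2)" by blast
  define u where "u = t^(2^(Suc j))"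
  define a where "a = sqrt (\<delta>/2)"
  define b where "b = - c/(2*a)"
  have a: "a > 0" "a^2 = \<delta>/2" unfolding a_def using Suc by auto
  define q where "q = cst a + cst b * u"
  have "q^2 = cst (a^2) + cst (2*a*b) * u + cst (b^2) * u^2"
    unfolding q_def by (rule sq_lin)
  also have "2*a*b = - c" unfolding b_def using a by simp
  finally have e2: "q^2 = cst (\<delta>/2) - cst c * u + cst (b^2) * u^2" using a by (simp add: cst_uminus)
  have uu: "u^2 = t^(2^(Suc (Suc j)))" unfolding u_def by (simp add: power_mult[symmetric] mult.commute)
  have "cst \<delta> + t + cst (b^2) * t^(2^(Suc (Suc j))) = (\<Sum>q\<leftarrow>qs. q^2) + q^2"
  proof -
    have h: "cst \<delta> = cst (\<delta>/2) + cst (\<delta>/2)" by (simp add: cst_add[symmetric])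
    have "cst \<delta> + t + cst (b^2) * t^(2^(Suc (Suc j))) =
       (cst (\<delta>/2) + t + cst c * u) + (cst (\<delta>/2) - cst c * u + cst (b^2) * u^2)"
      unfolding uu h by (simp add: algebra_simps)
    also have "\<dots> = (\<Sum>q\<leftarrow>qs. q^2) + q^2" unfolding e2[symmetric] e1[unfolded u_def[symmetric]] ..
    finally show ?thesis .
  qed
  moreover have "\<forall>q\<in>set (qs@[q]). deg_le (2^(Suc j)*D) q"
  proof -
    have "deg_le (2^Suc j * D) u" unfolding u_def using deg_le_power[OF assms] by simp
    then have "deg_le (2^Suc j * D) q" unfolding q_def
      using deg_le_add[OF deg_le_cst deg_le_mult[OF deg_le_cst[of 0]]] by fastforce
    moreover have "\<forall>q\<in>set qs. deg_le (2^(Suc j)*D) q" using qs by (auto intro: deg_le_mono)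
    ultimately show ?thesis by simp
  qed
  ultimately show ?case by (intro exI[of _ "b^2"] exI[of _ "qs@[q]"]) simp
qed

lemma sum_list_mult_sq: "(\<Sum>g\<leftarrow>gs. (a * g)^2) = a^2 * (\<Sum>g\<leftarrow>gs. g^2 :: 'n::finite rpoly)"
  by (induct gs) (simp_all add: algebra_simps power2_eq_square)

lemma sum_list_map_comp: "(\<Sum>h\<leftarrow>map f gs. h^2) = (\<Sum>g\<leftarrow>gs. (f g)^2 :: 'n::finite rpoly)"
  by (induct gs) simp_all

lemma sum_list_map_sq_mult: "(\<Sum>h\<leftarrow>map (\<lambda>h. a*h) hs. h^2) = a^2 * (\<Sum>h\<leftarrow>hs. h^2 :: 'n::finite rpoly)"
  by (induct hs) (simp_all add: algebra_simps power2_eq_square)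

lemma cert_sos:
  fixes t :: "'n::finite rpoly"
  assumes I: "is_ideal I" and dt: "deg_le D t" and dg: "\<forall>g\<in>set gs. deg_le E g"
    and cert: "t^(2*m) + (\<Sum>g\<leftarrow>gs. g^2) \<in> I" and d: "\<delta> > 0"
  shows "k_sos_mod (2^m*D + 2^m*D + E) I (cst \<delta> + t)"
proof -
  define e :: nat where "e = 2^m"
  have me: "m \<le> e" unfolding e_def using less_exp[of m] by simp
  define hs where "hs = map (\<lambda>g. t^(e-m) * g) gs"
  have hsq: "t^(2*e) + (\<Sum>h\<leftarrow>hs. h^2) = (t^(e-m))^2 * (t^(2*m) + (\<Sum>g\<leftarrow>gs. g^2))"
  proof -
    have "2*e = 2*(e-m) + 2*m" using me by simp
    then have "t^(2*e) = t^(2*(e-m)) * t^(2*m)" by (simp only: power_add)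
    moreover have "t^(2*(e-m)) = (t^(e-m))^2" by (simp add: power_mult[symmetric] mult.commute)
    ultimately have "t^(2*e) = (t^(e-m))^2 * t^(2*m)" by simp
    then show ?thesis unfolding hs_def sum_list_map_sq_mult by (simp only: distrib_left)
  qed
  have hI: "t^(2*e) + (\<Sum>h\<leftarrow>hs. h^2) \<in> I" unfolding hsq by (rule ideal_mult[OF I cert])
  have dh: "\<forall>h\<in>set hs. deg_le ((e-m)*D + E) h"
  proof
    fix h assume "h \<in> set hs"
    then obtain g where g: "g \<in> set gs" and h: "h = t^(e-m) * g" unfolding hs_def by auto
    show "deg_le ((e-m)*D + E) h" unfolding h
      by (rule deg_le_mult[OF deg_le_power[OF dt]]) (use g dg in blast)
  qed
  obtain c qs where c: "c \<ge> 0" and qs: "\<forall>q\<in>set qs. deg_le (2^m*D) q"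
    and eq: "cst \<delta> + t + cst c * t^(2^(Suc m)) = (\<Sum>q\<leftarrow>qs. q^2)"
    using univ_sos[OF dt d, of m] by blast
  have te: "t^(2^(Suc m)) = t^(2*e)" unfolding e_def by simp
  define gs' where "gs' = qs @ map (\<lambda>h. cst (sqrt c) * h) hs"
  have "(\<Sum>g\<leftarrow>gs'. g^2) = (\<Sum>q\<leftarrow>qs. q^2) + cst c * (\<Sum>h\<leftarrow>hs. h^2)"
    unfolding gs'_def map_append sum_list_append sum_list_map_sq_mult using c by (simp add: cst_power[symmetric])
  moreover
  { fix P H Q :: "'n rpoly"
    assume "cst \<delta> + t + cst c * P = Q"
    then have "cst \<delta> + t - (Q + cst c * H) = - (cst c * (P + H))" by (simp add: algebra_simps) }
  note alg = this
  ultimately have "cst \<delta> + t - (\<Sum>g\<leftarrow>gs'. g^2) = - (cst c * (t^(2*e) + (\<Sum>h\<leftarrow>hs. h^2)))"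
    using alg[OF eq[unfolded te]] by simp
  moreover have "- (cst c * (t^(2*e) + (\<Sum>h\<leftarrow>hs. h^2))) \<in> I"
    by (rule ideal_neg[OF I ideal_mult[OF I hI]])
  moreover have "\<forall>g\<in>set gs'. deg_le (2^m*D + 2^m*D + E) g"
  proof -
    have "(e-m)*D \<le> e*D" by (rule mult_le_mono1[OF diff_le_self])
    then have "(e-m)*D + E \<le> 2^m*D + 2^m*D + E" unfolding e_def by linarith
    note b = this
    show ?thesis
    proof
      fix g assume "g \<in> set gs'"
      then consider "g \<in> set qs" | h where "h \<in> set hs" "g = cst (sqrt c) * h" unfolding gs'_def by auto
      then show "deg_le (2^m*D + 2^m*D + E) g"
      proof cases
        case 1 then show ?thesis using qs deg_le_mono by fastforce
      next
        case (2 h)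
        have "deg_le (0 + ((e-m)*D + E)) (cst (sqrt c) * h)"
          by (rule deg_le_mult[OF deg_le_cst]) (use 2 dh in blast)
        then show ?thesis using 2 b deg_le_mono by fastforce
      qed
    qed
  qed
  ultimately show ?thesis unfolding k_sos_mod_def by (intro exI[of _ gs']) simp
qed

lemma poly_sum_single: "p = (\<Sum>m\<in>Poly_Mapping.keys p. Poly_Mapping.single m (Poly_Mapping.lookup p m))"
proof (rule poly_mapping_eqI)
  fix k
  show "Poly_Mapping.lookup p k = Poly_Mapping.lookup (\<Sum>m\<in>Poly_Mapping.keys p. Poly_Mapping.single m (Poly_Mapping.lookup p m)) k"
    by (simp add: lookup_sum lookup_single when_def in_keys_iff)
qed

lemma finite_mons: "finite {m::'n::finite \<Rightarrow>\<^sub>0 nat. mon_deg m \<le> D}"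
proof -
  let ?M = "{m::'n::finite \<Rightarrow>\<^sub>0 nat. mon_deg m \<le> D}"
  have "Poly_Mapping.lookup ` ?M \<subseteq> {f. \<forall>x. (x \<in> UNIV \<longrightarrow> f x \<in> {0..D}) \<and> (x \<notin> UNIV \<longrightarrow> f x = 0)}"
  proof clarsimp
    fix m :: "'n \<Rightarrow>\<^sub>0 nat" and x assume "mon_deg m \<le> D"
    moreover have "Poly_Mapping.lookup m x \<le> mon_deg m" unfolding mon_deg_def
      by (rule member_le_sum) auto
    ultimately show "Poly_Mapping.lookup m x \<le> D" by simp
  qed
  moreover have "finite {f::'n\<Rightarrow>nat. \<forall>x. (x \<in> UNIV \<longrightarrow> f x \<in> {0..D}) \<and> (x \<notin> UNIV \<longrightarrow> f x = 0)}"
    by (rule finite_set_of_finite_funs) auto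
  ultimately have "finite (Poly_Mapping.lookup ` ?M)" by (rule finite_subset)
  moreover have "inj_on Poly_Mapping.lookup ?M" by (rule inj_onI) (metis poly_mapping_eqI)
  ultimately show ?thesis using finite_imageD by blast
qed

lemma finite_span:
  fixes S :: "'n::finite rpoly set"
  assumes "\<And>p. p \<in> S \<Longrightarrow> deg_le D p"
  shows "\<exists>B. finite B \<and> B \<subseteq> S \<and> (\<forall>f\<in>S. \<exists>u. f = (\<Sum>b\<in>B. cst (u b) * b))"
proof -
  interpret V: vector_space "(\<lambda>c p. cst c * p) :: real \<Rightarrow> 'n rpoly \<Rightarrow> 'n rpoly"
    by unfold_locales (simp_all add: cst_add cst_mult cst_one algebra_simps)
  define T where "T = (\<lambda>m. Poly_Mapping.single m (1::real)) ` {m::'n \<Rightarrow>\<^sub>0 nat. mon_deg m \<le> D}"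
  have fT: "finite T" unfolding T_def using finite_mons by blast
  have ST: "S \<subseteq> V.span T"
  proof
    fix p assume "p \<in> S"
    then have d: "deg_le D p" by (rule assms)
    have "(\<Sum>m\<in>Poly_Mapping.keys p. Poly_Mapping.single m (Poly_Mapping.lookup p m)) \<in> V.span T"
    proof (rule V.span_sum)
      fix m assume m: "m \<in> Poly_Mapping.keys p"
      have "Poly_Mapping.single m 1 \<in> T" unfolding T_def using d m deg_le_def by blast
      then have "cst (Poly_Mapping.lookup p m) * Poly_Mapping.single m 1 \<in> V.span T"
        by (intro V.span_scale V.span_base)
      then show "Poly_Mapping.single m (Poly_Mapping.lookup p m) \<in> V.span T"
        by (simp add: cst_def mult_single)
    qed
    then show "p \<in> V.span T" using poly_sum_single[of p] by simp
  qed
  obtain B where B: "B \<subseteq> S" "V.independent B" "S \<subseteq> V.span B"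
    using V.maximal_independent_subset by blast
  have fB: "finite B" using V.independent_span_bound[OF fT B(2)] B(1) ST by blast
  show ?thesis using B fB V.span_finite[OF fB] by (intro exI[of _ B]) blast
qed

lemma peval_add: "peval (p + q) x = peval p x + peval q x"
  unfolding peval_def
  by (rule setsum_keys_plus_distrib[where f = "\<lambda>m v. v * (\<Prod>i\<in>UNIV. x i ^ Poly_Mapping.lookup m i)"])
     (simp_all add: algebra_simps)

lemma peval_cst: "peval (cst c) x = c"
  unfolding peval_def cst_def by simp

lemma cst_sum: "(\<Sum>b\<in>B. cst (f b)) = cst (\<Sum>b\<in>B. f b)"
  by (induct B rule: infinite_finite_induct) (simp_all add: cst_zero cst_add)

lemma deg_le_sos: "\<forall>g\<in>set gs. deg_le k g \<Longrightarrow> deg_le (2*k) (\<Sum>g\<leftarrow>gs. g^2 :: 'n::finite rpoly)"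
proof (induct gs)
  case Nil then show ?case by (simp add: deg_le_0)
next
  case (Cons g gs)
  have "deg_le (k+k) (g*g)" using Cons(2) by (intro deg_le_mult) auto
  then have "deg_le (2*k) (g^2)" by (simp add: power2_eq_square mult_2)
  with Cons show ?case by (simp add: deg_le_add)
qed

lemma basis_elem:
  fixes b :: "'n::finite rpoly"
  assumes I: "is_ideal I" and b: "b \<in> real_radical I" and db: "deg_le D b"
  shows "\<exists>N. \<forall>c \<delta>. \<delta> > 0 \<longrightarrow> k_sos_mod N I (cst \<delta> + cst c * b)"
proof -
  obtain m gs where cert: "b^(2*m) + (\<Sum>g\<leftarrow>gs. g^2) \<in> I"
    using b unfolding real_radical_def by blast
  obtain E where E: "\<forall>g\<in>set gs. deg_le E g" using deg_le_list by blast
  show ?thesis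
  proof (intro exI[of _ "2^m*D + 2^m*D + E"] allI impI)
    fix c \<delta> :: real assume d: "\<delta> > 0"
    define t where "t = cst c * b"
    have dt: "deg_le D t" unfolding t_def using deg_le_mult[OF deg_le_cst[of 0] db] by simp
    define gs' where "gs' = map (\<lambda>g. cst (c^m) * g) gs"
    have dg: "\<forall>g\<in>set gs'. deg_le E g" unfolding gs'_def using E deg_le_mult[OF deg_le_cst[of 0]] by fastforce
    have "t^(2*m) + (\<Sum>g\<leftarrow>gs'. g^2) = cst (c^(2*m)) * (b^(2*m) + (\<Sum>g\<leftarrow>gs. g^2))"
      unfolding t_def gs'_def sum_list_map_comp sum_list_mult_sq
      by (simp add: power_mult_distrib cst_power[symmetric] power_mult[symmetric] algebra_simps)
    then have "t^(2*m) + (\<Sum>g\<leftarrow>gs'. g^2) \<in> I" using cert I ideal_mult by metis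
    from cert_sos[OF I dt dg this d] show "k_sos_mod (2^m*D + 2^m*D + E) I (cst \<delta> + cst c * b)"
      unfolding t_def .
  qed
qed

theorem mainTheorem6:
  fixes I :: "'n::finite rpoly set"
  assumes "is_ideal I"
  shows "\<exists>\<Psi>::nat \<Rightarrow> nat. \<forall>k. theta_body (\<Psi> k) I \<subseteq> theta_body k (real_radical I)"
proof -
  note I = assms
  have "\<forall>k. \<exists>N. theta_body N I \<subseteq> theta_body k (real_radical I)"
  proof
    fix k :: nat
    define D where "D = 2*k+1"
    define S where "S = {f. f \<in> real_radical I \<and> deg_le D f}"
    obtain B where fB: "finite B" and BS: "B \<subseteq> S" and sp: "\<forall>f\<in>S. \<exists>u. f = (\<Sum>b\<in>B. cst (u b) * b)"
      using finite_span[of S D] unfolding S_def by blast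
    define Nb where "Nb b = (SOME N. \<forall>c \<delta>. \<delta> > 0 \<longrightarrow> k_sos_mod N I (cst \<delta> + cst c * b))" for b
    have Nb: "\<forall>c \<delta>. \<delta> > 0 \<longrightarrow> k_sos_mod (Nb b) I (cst \<delta> + cst c * b)" if "b \<in> B" for b
    proof -
      have "b \<in> real_radical I" "deg_le D b" using that BS S_def by auto
      from basis_elem[OF I this] show ?thesis unfolding Nb_def by (rule someI_ex)
    qed
    define N where "N = k + (\<Sum>b\<in>B. Nb b)"
    have NbN: "Nb b \<le> N" if "b \<in> B" for b
      unfolding N_def using member_le_sum[OF that, of Nb] fB by simp
    show "\<exists>N. theta_body N I \<subseteq> theta_body k (real_radical I)"
    proof (intro exI[of _ N] subsetI)
      fix p assume p: "p \<in> theta_body N I"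
      show "p \<in> theta_body k (real_radical I)"
        unfolding theta_body_def
      proof (clarify)
        fix l assume dl: "deg_le 1 l" and ls: "k_sos_mod k (real_radical I) l"
        obtain gs where gs: "\<forall>g\<in>set gs. deg_le k g" and lr: "l - (\<Sum>g\<leftarrow>gs. g^2) \<in> real_radical I"
          using ls unfolding k_sos_mod_def by blast
        define \<sigma> where "\<sigma> = (\<Sum>g\<leftarrow>gs. g^2)"
        have "deg_le D (l - \<sigma>)" unfolding \<sigma>_def D_def
          using deg_le_diff[OF deg_le_mono[OF dl] deg_le_mono[OF deg_le_sos[OF gs]]] by simp
        then have "l - \<sigma> \<in> S" using lr unfolding S_def \<sigma>_def by blast
        then obtain u where u: "l - \<sigma> = (\<Sum>b\<in>B. cst (u b) * b)" using sp by blast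
        have pos: "peval l p + \<epsilon> \<ge> 0" if e: "\<epsilon> > 0" for \<epsilon>
        proof -
          define \<delta> where "\<delta> = \<epsilon> / (real (card B) + 1)"
          have dpos: "\<delta> > 0" unfolding \<delta>_def using e by simp
          have "\<delta> * (real (card B) + 1) = \<epsilon>" unfolding \<delta>_def by simp
          then have "\<delta> + real (card B) * \<delta> = \<epsilon>" by (simp add: algebra_simps)
          then have ce: "cst \<epsilon> = cst \<delta> + (\<Sum>b\<in>B. cst \<delta>)"
            unfolding cst_sum cst_add[symmetric] sum_constant by simp
          have eq: "cst \<epsilon> + l = \<sigma> + cst \<delta> + (\<Sum>b\<in>B. cst \<delta> + cst (u b) * b)"
            unfolding ce sum.distrib u[symmetric] by (simp add: algebra_simps)
          have "k_sos_mod N I \<sigma>" using gs unfolding \<sigma>_def k_sos_mod_def N_def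
            by (intro exI[of _ gs]) (auto intro: deg_le_mono simp: ideal_zero[OF I])
          moreover have "k_sos_mod N I (cst \<delta>)"
          proof -
            have "cst \<delta> = (cst (sqrt \<delta>))^2" using dpos by (simp add: cst_power[symmetric])
            then show ?thesis using sos_mod_sq[OF I deg_le_cst] by metis
          qed
          moreover have "k_sos_mod N I (\<Sum>b\<in>B. cst \<delta> + cst (u b) * b)"
            using Nb dpos NbN by (intro sos_mod_sum[OF I fB]) (blast intro: sos_mod_mono)
          ultimately have "k_sos_mod N I (cst \<epsilon> + l)" unfolding eq by (intro sos_mod_add[OF I])
          moreover have "deg_le 1 (cst \<epsilon> + l)" by (intro deg_le_add deg_le_cst dl)
          ultimately have "peval (cst \<epsilon> + l) p \<ge> 0" using p unfolding theta_body_def by blast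
          then show ?thesis by (simp add: peval_add peval_cst)
        qed
        show "0 \<le> peval l p"
        proof (rule ccontr)
          assume "\<not> 0 \<le> peval l p"
          then have "- peval l p / 2 > 0" by simp
          from pos[OF this] \<open>\<not> 0 \<le> peval l p\<close> show False by simp
        qed
      qed
    qed
  qed
  then show ?thesis by metis
qed

end
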